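(* For an ensemble $\mathcal{E}=\{\eta_{i},\rho_{i}\}_{i\in\mathbb{N}_{n}}$ and $x\in\mathbb{N}_{n}$, $$\mathbb{M}_{x}(\mathcal{E})=\{E\in\mathbb{H}_{+}\mid E\,\Pi_{x}(\mathcal{E})=\mathbb{O}\},\qquad \mathbb{M}_{x}^{*}(\mathcal{E})=\{E\in\mathbb{H}\mid \Pi_{x}^{\bot}(\mathcal{E})E\Pi_{x}^{\bot}(\mathcal{E})\in\mathbb{H}_{+}\},$$ where $\Pi_{x}(\mathcal{E})$ and $\Pi_{x}^{\bot}(\mathcal{E})$ are the orthogonal projections onto the support and the kernel of $\mathcal{C}_{x}(\mathcal{E})\rho_{0}-\eta_{x}\rho_{x}$, respectively, and $\mathbb{O}$ is the zero operator.
   Context: $\mathbb{N}_{n}=\{1,\ldots,n\}$. $\mathcal{H}$ is a finite-dimensional complex Hilbert space, $\mathbb{H}$ the Hermitian operators on it, $\mathbb{H}_{+}$ the positive-semidefinite ones. An ensemble $\{\eta_{i},\rho_{i}\}_{i\in\mathbb{N}_{n}}$: density operators $\rho_i$ with probabilities $\eta_i>0$ summing to $1$; $\rho_0=\sum_i\eta_i\rho_i$. A measurement is $\{M_{?}\}\cup\{M_{i}\}_{i\in\mathbb{N}_{n}}\subseteq\mathbb{H}_+$ summing to the identity. $\mathcal{C}_{x}(\mathcal{E})$ is the maximum of $\eta_{x}\Tr(\rho_{x}M_{x})/\Tr(\rho_{0}M_{x})$ over measurements with $\Tr(\rho_{0}M_{x})>0$. $\mathbb{M}_{x}(\mathcal{E})=\{E\in\mathbb{H}_{+}\mid\Tr[(\mathcal{C}_{x}(\mathcal{E})\rho_{0}-\eta_{x}\rho_{x})E]=0\}$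 and $\mathbb{M}_{x}^{*}(\mathcal{E})=\{E\in\mathbb{H}\mid\Tr(EF)\ge0\ \forall F\in\mathbb{M}_{x}(\mathcal{E})\}$. *)

theory Defs
  imports "HOL-Analysis.Analysis"
begin

definition cinner :: "complex^'d \<Rightarrow> complex^'d \<Rightarrow> complex" where
  "cinner v w = (\<Sum>i\<in>UNIV. cnj (v $ i) * w $ i)"

definition adjoint_mat :: "complex^'d^'d \<Rightarrow> complex^'d^'d" where
  "adjoint_mat A = (\<chi> i j. cnj (A $ j $ i))"

definition hermitian :: "complex^'d^'d \<Rightarrow> bool" where
  "hermitian A \<longleftrightarrow> adjoint_mat A = A"

definition psd :: "complex^'d^'d \<Rightarrow> bool" where
  "psd A \<longleftrightarrow> hermitian A \<and> (\<forall>v. 0 \<le> Re (cinner v (A *v v)))"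

definition density :: "complex^'d^'d \<Rightarrow> bool" where
  "density A \<longleftrightarrow> psd A \<and> trace A = 1"

definition kernel_op :: "complex^'d^'d \<Rightarrow> (complex^'d) set" where
  "kernel_op A = {v. A *v v = 0}"

definition support_op :: "complex^'d^'d \<Rightarrow> (complex^'d) set" where
  "support_op A = {v. \<forall>w\<in>kernel_op A. cinner w v = 0}"

definition is_orth_proj :: "complex^'d^'d \<Rightarrow> (complex^'d) set \<Rightarrow> bool" where
  "is_orth_proj P S \<longleftrightarrow> hermitian P \<and> P ** P = P \<and> range ((*v) P) = S"

definition orth_proj :: "(complex^'d) set \<Rightarrow> complex^'d^'d" where
  "orth_proj S = (THE P. is_orth_proj P S)"

definition ensemble :: "nat \<Rightarrow> (nat \<Rightarrow> real) \<Rightarrow> (nat \<Rightarrow> complex^'d^'d) \<Rightarrow> bool" where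
  "ensemble n \<eta> \<rho> \<longleftrightarrow> (\<forall>i\<in>{1..n}. \<eta> i > 0 \<and> density (\<rho> i)) \<and> (\<Sum>i=1..n. \<eta> i) = 1"

definition rho0 :: "nat \<Rightarrow> (nat \<Rightarrow> real) \<Rightarrow> (nat \<Rightarrow> complex^'d^'d) \<Rightarrow> complex^'d^'d" where
  "rho0 n \<eta> \<rho> = (\<Sum>i=1..n. \<eta> i *\<^sub>R \<rho> i)"

text \<open>Measurement {M?} \<union> {M i}, i in {1..n}.\<close>
definition measurement :: "nat \<Rightarrow> complex^'d^'d \<Rightarrow> (nat \<Rightarrow> complex^'d^'d) \<Rightarrow> bool" where
  "measurement n Mq M \<longleftrightarrow> psd Mq \<and> (\<forall>i\<in>{1..n}. psd (M i)) \<and> Mq + (\<Sum>i=1..n. M i) = mat 1"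

definition Cx :: "nat \<Rightarrow> (nat \<Rightarrow> real) \<Rightarrow> (nat \<Rightarrow> complex^'d^'d) \<Rightarrow> nat \<Rightarrow> real" where
  "Cx n \<eta> \<rho> x = Sup {\<eta> x * Re (trace (\<rho> x ** M x)) / Re (trace (rho0 n \<eta> \<rho> ** M x)) | Mq M.
      measurement n Mq M \<and> Re (trace (rho0 n \<eta> \<rho> ** M x)) > 0}"

definition Dx :: "nat \<Rightarrow> (nat \<Rightarrow> real) \<Rightarrow> (nat \<Rightarrow> complex^'d^'d) \<Rightarrow> nat \<Rightarrow> complex^'d^'d" where
  "Dx n \<eta> \<rho> x = Cx n \<eta> \<rho> x *\<^sub>R rho0 n \<eta> \<rho> - \<eta> x *\<^sub>R \<rho> x"

definition Mset :: "nat \<Rightarrow> (nat \<Rightarrow> real) \<Rightarrow> (nat \<Rightarrow> complex^'d^'d) \<Rightarrow> nat \<Rightarrow> (complex^'d^'d) set" where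
  "Mset n \<eta> \<rho> x = {E. psd E \<and> trace (Dx n \<eta> \<rho> x ** E) = 0}"

definition Mdual :: "nat \<Rightarrow> (nat \<Rightarrow> real) \<Rightarrow> (nat \<Rightarrow> complex^'d^'d) \<Rightarrow> nat \<Rightarrow> (complex^'d^'d) set" where
  "Mdual n \<eta> \<rho> x = {E. hermitian E \<and> (\<forall>F\<in>Mset n \<eta> \<rho> x. 0 \<le> Re (trace (E ** F)))}"

end

theory Submission imports Defs begin

definition outer :: "complex^'d \<Rightarrow> complex^'d \<Rightarrow> complex^'d^'d" where
  "outer u w = (\<chi> i j. u $ i * cnj (w $ j))"

lemma cinner_add_right: "cinner u (v + w) = cinner u v + cinner u w"
  by (simp add: cinner_def sum.distrib distrib_left)
lemma cinner_add_left: "cinner (u + v) w = cinner u w + cinner v w"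
  by (simp add: cinner_def sum.distrib distrib_right)
lemma cinner_diff_right: "cinner u (v - w) = cinner u v - cinner u w"
  by (simp add: cinner_def sum_subtractf right_diff_distrib)
lemma cinner_diff_left: "cinner (u - v) w = cinner u w - cinner v w"
  by (simp add: cinner_def sum_subtractf left_diff_distrib)
lemma cinner_scale_right: "cinner u (c *s v) = c * cinner u v"
  by (simp add: cinner_def sum_distrib_left mult_ac)
lemma cinner_scale_left: "cinner (c *s u) v = cnj c * cinner u v"
  by (simp add: cinner_def sum_distrib_left mult_ac)
lemma cinner_zero_right[simp]: "cinner u 0 = 0"
  by (simp add: cinner_def)
lemma cinner_zero_left[simp]: "cinner 0 u = 0"
  by (simp add: cinner_def)
lemma cinner_sum_right: "cinner u (sum f S) = (\<Sum>k\<in>S. cinner u (f k))"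
  unfolding cinner_def sum_component sum_distrib_left by (rule sum.swap)
lemma cinner_commute: "cinner v w = cnj (cinner w v)"
  by (simp add: cinner_def mult.commute)

lemma cinner_self: "cinner v v = of_real (\<Sum>i\<in>UNIV. (cmod (v $ i))^2)"
  unfolding cinner_def of_real_sum
  by (intro sum.cong refl) (metis complex_norm_square mult.commute)

lemma cinner_self_Re_nonneg: "0 \<le> Re (cinner v v)"
  by (simp add: cinner_self sum_nonneg)

lemma cinner_self_real: "cinner v v = of_real (Re (cinner v v))"
  by (simp add: cinner_self)

lemma cinner_self_eq_0: "cinner v v = 0 \<longleftrightarrow> v = 0"
proof
  assume "cinner v v = 0"
  then have "(\<Sum>i\<in>UNIV. (cmod (v $ i))^2) = 0" unfolding cinner_self of_real_eq_0_iff .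
  then have "\<forall>i\<in>UNIV. (cmod (v $ i))^2 = 0"
    by (subst sum_nonneg_eq_0_iff[symmetric]) auto
  then show "v = 0" by (simp add: vec_eq_iff)
qed simp

lemma cinner_ext: "(\<And>u. cinner u a = cinner u b) \<Longrightarrow> a = b"
proof -
  assume "\<And>u. cinner u a = cinner u b"
  then have "cinner (a - b) (a - b) = 0" by (simp add: cinner_diff_right)
  then show "a = b" by (simp add: cinner_self_eq_0)
qed

lemma cinner_adjoint: "cinner u (A *v v) = cinner (adjoint_mat A *v u) v"
proof -
  have "cinner u (A *v v) = (\<Sum>i\<in>UNIV. \<Sum>j\<in>UNIV. cnj (u $ i) * A $ i $ j * v $ j)"
    by (simp add: cinner_def matrix_vector_mult_def sum_distrib_left mult.assoc)
  also have "\<dots> = (\<Sum>j\<in>UNIV. \<Sum>i\<in>UNIV. cnj (u $ i) * A $ i $ j * v $ j)"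
    by (rule sum.swap)
  also have "\<dots> = cinner (adjoint_mat A *v u) v"
    by (simp add: cinner_def matrix_vector_mult_def adjoint_mat_def sum_distrib_left mult_ac)
  finally show ?thesis .
qed

lemma hermitian_cinner: "hermitian A \<Longrightarrow> cinner u (A *v v) = cinner (A *v u) v"
  by (metis cinner_adjoint hermitian_def)

lemma adjoint_mult: "adjoint_mat (A ** B) = adjoint_mat B ** adjoint_mat A"
  by (simp add: adjoint_mat_def matrix_matrix_mult_def vec_eq_iff mult.commute)
lemma adjoint_add: "adjoint_mat (A + B) = adjoint_mat A + adjoint_mat B"
  by (simp add: adjoint_mat_def vec_eq_iff)
lemma adjoint_diff: "adjoint_mat (A - B) = adjoint_mat A - adjoint_mat B"
  by (simp add: adjoint_mat_def vec_eq_iff)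
lemma adjoint_scaleR: "adjoint_mat (c *\<^sub>R A) = c *\<^sub>R adjoint_mat A"
  by (simp add: adjoint_mat_def vec_eq_iff)
lemma adjoint_mat1: "adjoint_mat (mat 1) = mat 1"
  by (simp add: adjoint_mat_def mat_def vec_eq_iff)
lemma adjoint_outer: "adjoint_mat (outer u w) = outer w u"
  by (simp add: adjoint_mat_def outer_def vec_eq_iff mult.commute)

lemma outer_mult: "outer u w *v v = cinner w v *s u"
  by (simp add: outer_def cinner_def matrix_vector_mult_def vector_scalar_mult_def
      vec_eq_iff sum_distrib_left sum_distrib_right mult_ac)

lemma trace_outer: "trace (A ** outer w w) = cinner w (A *v w)"
  by (simp add: trace_def outer_def cinner_def matrix_matrix_mult_def matrix_vector_mult_def
      sum_distrib_left mult_ac)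

lemma sum_mult_vec: "(sum f S) *v v = (\<Sum>k\<in>S. f k *v v)"
  unfolding vec_eq_iff matrix_vector_mult_def
  by (simp only: vec_lambda_beta sum_component sum_distrib_right) (intro allI sum.swap)

lemma mult_sum_mat: "(A::complex^'d^'d) ** (sum f S) = (\<Sum>k\<in>S. A ** f k)"
  unfolding vec_eq_iff matrix_matrix_mult_def
  by (simp only: vec_lambda_beta sum_component sum_distrib_left) (intro allI sum.swap)

lemma trace_sum: "trace (sum f S) = (\<Sum>k\<in>S. trace (f k :: complex^'d^'d))"
  unfolding trace_def by (simp only: sum_component) (rule sum.swap)


lemma mv_add: "(F::complex^'d^'d) *v (x + y) = F *v x + F *v y"
  by (simp add: matrix_vector_mult_def vec_eq_iff distrib_left sum.distrib)
lemma mv_scale: "(F::complex^'d^'d) *v (t *s x) = t *s (F *v x)"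
  by (rule vector_scalar_commute)

lemma hermitian_cinner_cnj: "hermitian F \<Longrightarrow> cinner v (F *v e) = cnj (cinner e (F *v v))"
  by (metis cinner_commute hermitian_cinner)

lemma hermitian_form_real:
  assumes "hermitian F" shows "cinner v (F *v v) = of_real (Re (cinner v (F *v v)))"
proof -
  have "cinner v (F *v v) = cnj (cinner v (F *v v))" by (rule hermitian_cinner_cnj[OF assms])
  then have "Im (cinner v (F *v v)) = 0" by (simp add: complex_eq_iff)
  then show ?thesis by (simp add: complex_eq_iff)
qed

lemma expand_form:
  "cinner (v + t *s e) (F *v (v + t *s e)) = cinner v (F *v v) + t * cinner v (F *v e)
     + cnj t * cinner e (F *v v) + cnj t * t * cinner e (F *v e)"
  by (simp add: mv_add mv_scale cinner_add_left cinner_add_right cinner_scale_left cinner_scale_right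
      algebra_simps)

lemma psd_herm: "psd A \<Longrightarrow> hermitian A" by (simp add: psd_def)
lemma psd_nonneg: "psd A \<Longrightarrow> 0 \<le> Re (cinner v (A *v v))" by (simp add: psd_def)

lemma psd_outer: "psd (outer w w)"
proof -
  have "cinner v (outer w w *v v) = cinner w v * cnj (cinner w v)" for v
    by (simp add: outer_mult cinner_scale_right mult.commute cinner_commute[of v w])
  then show ?thesis
    by (simp add: psd_def hermitian_def adjoint_outer)
qed

lemma hermitian_add: "hermitian A \<Longrightarrow> hermitian B \<Longrightarrow> hermitian (A + B)"
  by (simp add: hermitian_def adjoint_add)
lemma hermitian_diff: "hermitian A \<Longrightarrow> hermitian B \<Longrightarrow> hermitian (A - B)"
  by (simp add: hermitian_def adjoint_diff)
lemma hermitian_scaleR: "hermitian A \<Longrightarrow> hermitian (c *\<^sub>R A)"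
  by (simp add: hermitian_def adjoint_scaleR)

lemma scaleR_mv: "((c::real) *\<^sub>R (A::complex^'d^'d)) *v v = of_real c *s (A *v v)"
  by (simp add: matrix_vector_mult_def vector_scalar_mult_def vec_eq_iff sum_distrib_left
      scaleR_conv_of_real[where 'a=complex] mult_ac)

lemma psd_add: "psd A \<Longrightarrow> psd B \<Longrightarrow> psd (A + B)"
  by (simp add: psd_def hermitian_add matrix_vector_mult_add_rdistrib cinner_add_right)

lemma psd_scaleR: "psd A \<Longrightarrow> 0 \<le> c \<Longrightarrow> psd (c *\<^sub>R A)"
  by (simp add: psd_def hermitian_scaleR scaleR_mv cinner_scale_right)

lemma psd_zero: "psd (0::complex^'d^'d)"
  by (simp add: psd_def hermitian_def adjoint_mat_def vec_eq_iff)

lemma psd_sum: "(\<And>k. k \<in> S \<Longrightarrow> psd (f k)) \<Longrightarrow> psd (sum f S)"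
proof (induction S rule: infinite_finite_induct)
  case (infinite A) then show ?case by (simp add: psd_zero)
next
  case empty then show ?case by (simp add: psd_zero)
next
  case (insert x F) then show ?case by (simp add: psd_add)
qed

lemma quad_aux:
  fixes N b :: real
  assumes "0 \<le> b" "0 \<le> N" "\<And>s. 0 \<le> s^2 * b - 2 * s * N"
  shows "N = 0"
proof (rule ccontr)
  assume "N \<noteq> 0"
  then have N: "N > 0" using assms by auto
  define s where "s = N/(b+1)"
  have b1: "b + 1 > 0" using assms(1) by simp
  have e1: "(b+1) * s = N" using b1 by (simp add: s_def)
  have "(b+1)^2 * (s^2 * b - 2 * s * N) = ((b+1) * s)^2 * b - 2*(b+1)*((b+1) * s)*N"
    by (simp add: algebra_simps power2_eq_square)
  also have "\<dots> = N^2 * b - 2 * N^2 * (b+1)" unfolding e1 by (simp add: power2_eq_square)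
  also have "\<dots> = - (N^2 * (b + 2))" by (simp add: algebra_simps)
  also have "\<dots> < 0" using N assms(1) by (simp add: mult_pos_pos)
  finally have lt: "(b+1)^2 * (s^2 * b - 2 * s * N) < 0" .
  have "(b+1)^2 > 0" using b1 by simp
  then have "s^2 * b - 2 * s * N < 0" using lt mult_less_0_iff[of "(b+1)^2" "s^2 * b - 2 * s * N"] by auto
  then show False using assms(3)[of s] by simp
qed

lemma psd_form_zero:
  assumes A: "psd A" and z: "Re (cinner w (A *v w)) = 0"
  shows "A *v w = 0"
proof -
  define u where "u = A *v w"
  define N where "N = Re (cinner u u)"
  define b where "b = Re (cinner u (A *v u))"
  have H: "hermitian A" using A by (simp add: psd_def)
  have c1: "cinner w (A *v u) = cinner u u"
    using hermitian_cinner[OF H, of w u] by (simp add: u_def)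
  have c2: "cinner u (A *v w) = cinner u u" by (simp add: u_def)
  have "0 \<le> s^2 * b - 2 * s * N" for s :: real
  proof -
    have "0 \<le> Re (cinner (w + (- of_real s) *s u) (A *v (w + (- of_real s) *s u)))"
      using A by (simp add: psd_def)
    also have "\<dots> = s^2 * b - 2 * s * N"
      unfolding expand_form c1 c2 using z
      by (simp add: N_def b_def power2_eq_square)
    finally show ?thesis .
  qed
  then have "N = 0"
    using quad_aux[of b N] A cinner_self_Re_nonneg[of u] by (simp add: b_def N_def psd_def)
  then have "cinner u u = 0" by (metis N_def cinner_self_real of_real_0)
  then show ?thesis by (simp add: cinner_self_eq_0 u_def)
qed


lemma hermitian_outer: "hermitian (outer w w)"
  by (simp add: hermitian_def adjoint_outer)

lemma schur_step:
  assumes F: "psd F" and a_def: "a = Re (cinner e (F *v e))" and a: "a > 0"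
  shows "psd (F - (1/a) *\<^sub>R outer (F *v e) (F *v e))"
proof -
  have H: "hermitian F" using F by (simp add: psd_def)
  define f where "f = F *v e"
  have "0 \<le> Re (cinner v ((F - (1/a) *\<^sub>R outer f f) *v v))" for v
  proof -
    define q where "q = cinner e (F *v v)"
    define p where "p = cinner v (F *v v)"
    have fv: "cinner f v = q" using hermitian_cinner[OF H, of e v] by (simp add: f_def q_def)
    have vf: "cinner v f = cnj q" by (metis cinner_commute fv)
    have L: "cinner v ((F - (1/a) *\<^sub>R outer f f) *v v) = p - of_real (1/a) * (q * cnj q)"
      by (simp add: matrix_vector_mult_diff_rdistrib cinner_diff_right scaleR_mv outer_mult
          cinner_scale_right fv vf p_def mult_ac)
    define t where "t = - q / of_real a"
    have ee: "cinner e (F *v e) = of_real a" using hermitian_form_real[OF H, of e] a_def by simp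
    have ve: "cinner v (F *v e) = cnj q" using hermitian_cinner_cnj[OF H, of v e] q_def by simp
    have "cinner (v + t *s e) (F *v (v + t *s e)) = p + t * cnj q + cnj t * q + cnj t * t * of_real a"
      unfolding expand_form ee ve q_def[symmetric] p_def[symmetric] by simp
    also have "\<dots> = p - of_real (1/a) * (q * cnj q)"
      using a by (simp add: t_def field_simps)
    finally have "cinner v ((F - (1/a) *\<^sub>R outer f f) *v v) = cinner (v + t *s e) (F *v (v + t *s e))"
      using L by simp
    then show ?thesis using F by (simp add: psd_def)
  qed
  moreover have "hermitian (F - (1/a) *\<^sub>R outer f f)"
    by (intro hermitian_diff hermitian_scaleR H hermitian_outer)
  ultimately show ?thesis by (simp add: psd_def f_def)
qed

lemma mv_axis: "(F *v axis j 1) $ i = (F::complex^'d^'d) $ i $ j"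
  by (simp add: matrix_vector_mult_def axis_def if_distrib if_distribR cong: if_cong)

lemma outer_comp: "(of_real r * a) * cnj (of_real r * b) = (r^2) *\<^sub>R (a * cnj (b::complex))"
  by (simp add: scaleR_conv_of_real power2_eq_square)

lemma outer_scale_real: "outer (of_real r *s f) (of_real r *s f) = (r^2) *\<^sub>R outer f f"
  unfolding outer_def vector_scalar_mult_def vec_eq_iff
  by (simp only: vec_lambda_beta vector_scaleR_component outer_comp) simp

lemma outer_zero: "outer 0 0 = (0::complex^'d^'d)"
  by (simp add: outer_def vec_eq_iff)

lemma psd_decomp_aux:
  fixes J :: "'d::finite set"
  assumes "finite J"
  shows "psd F \<Longrightarrow> (\<forall>j. j \<notin> J \<longrightarrow> F *v axis j 1 = 0) \<Longrightarrow>
    \<exists>w. F = (\<Sum>k\<in>J. outer (w k) (w k))"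
  using assms
proof (induction J arbitrary: F rule: finite_induct)
  case empty
  then have "F $ i $ j = 0" for i j using mv_axis[of F j i] by simp
  then have "F = 0" by (simp add: vec_eq_iff)
  then show ?case by simp
next
  case (insert j J)
  define e :: "complex^'d" where "e = axis j 1"
  define a where "a = Re (cinner e (F *v e))"
  have H: "hermitian (F)" using insert.prems by (simp add: psd_def)
  have a0: "a \<ge> 0" using insert.prems by (simp add: psd_def a_def)
  show ?case
  proof (cases "a = 0")
    case True
    then have Fe: "F *v e = 0" using psd_form_zero[OF insert.prems(1)] a_def by simp
    have "\<forall>i. i \<notin> J \<longrightarrow> F *v axis i 1 = 0"
      using insert.prems(2) Fe e_def by auto
    then obtain w where w: "F = (\<Sum>k\<in>J. outer (w k) (w k))"
      using insert.IH insert.prems(1) by blast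
    define w' where "w' = w(j := 0)"
    have s1: "(\<Sum>k\<in>J. outer (w' k) (w' k)) = (\<Sum>k\<in>J. outer (w k) (w k))"
      using insert.hyps(2) by (intro sum.cong) (auto simp: w'_def)
    have "(\<Sum>k\<in>insert j J. outer (w' k) (w' k)) = outer (w' j) (w' j) + (\<Sum>k\<in>J. outer (w' k) (w' k))"
      using insert.hyps by simp
    also have "\<dots> = (\<Sum>k\<in>J. outer (w k) (w k))" using s1 by (simp add: w'_def outer_zero)
    finally have "(\<Sum>k\<in>insert j J. outer (w' k) (w' k)) = (\<Sum>k\<in>J. outer (w k) (w k))" .
    then show ?thesis using w by metis
  next
    case False
    then have apos: "a > 0" using a0 by simp
    define f where "f = F *v e"
    define F' where "F' = F - (1/a) *\<^sub>R outer f f"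
    have psdF': "psd F'" unfolding F'_def f_def
      by (rule schur_step[OF insert.prems(1) a_def apos])
    have fe: "cinner f e = of_real a"
      using hermitian_cinner[OF H, of e e] hermitian_form_real[OF H, of e]
      by (simp add: f_def a_def)
    have F'e: "F' *v e = 0"
      using apos by (simp add: F'_def matrix_vector_mult_diff_rdistrib scaleR_mv outer_mult fe
          f_def[symmetric] vector_scalar_mult_def vec_eq_iff)
    have F'i: "F' *v axis i 1 = 0" if "i \<notin> insert j J" for i
    proof -
      have Fi: "F *v axis i 1 = 0" using insert.prems(2) that by blast
      have "cinner f (axis i 1) = 0"
        using hermitian_cinner[OF H, of e "axis i 1"] Fi by (simp add: f_def)
      then show ?thesis
        by (simp add: F'_def matrix_vector_mult_diff_rdistrib scaleR_mv outer_mult Fi)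
    qed
    have "F' *v axis i 1 = 0" if "i \<notin> J" for i
    proof (cases "i = j")
      case True then show ?thesis using F'e e_def by simp
    next
      case False then show ?thesis using F'i that by simp
    qed
    then have "\<forall>i. i \<notin> J \<longrightarrow> F' *v axis i 1 = 0" by blast
    then obtain w where w: "F' = (\<Sum>k\<in>J. outer (w k) (w k))"
      using insert.IH psdF' by blast
    define w' where "w' = w(j := of_real (sqrt (1/a)) *s f)"
    have s1: "(\<Sum>k\<in>J. outer (w' k) (w' k)) = (\<Sum>k\<in>J. outer (w k) (w k))"
      using insert.hyps(2) by (intro sum.cong) (auto simp: w'_def)
    have "(\<Sum>k\<in>insert j J. outer (w' k) (w' k)) = outer (w' j) (w' j) + (\<Sum>k\<in>J. outer (w' k) (w' k))"
      using insert.hyps by simp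
    also have "\<dots> = outer (of_real (sqrt (1/a)) *s f) (of_real (sqrt (1/a)) *s f) + (\<Sum>k\<in>J. outer (w k) (w k))"
      using s1 by (simp add: w'_def)
    also have "\<dots> = (1/a) *\<^sub>R outer f f + F'"
      using apos by (simp only: outer_scale_real w[symmetric]) simp
    also have "\<dots> = F" by (simp add: F'_def)
    finally show ?thesis by metis
  qed
qed

lemma psd_decomp:
  assumes "psd (F::complex^'d^'d)"
  shows "\<exists>w::'d \<Rightarrow> complex^'d. F = (\<Sum>k\<in>UNIV. outer (w k) (w k))"
  using psd_decomp_aux[of UNIV F] assms by simp


lemma trace_decomp:
  "trace (A ** (\<Sum>k\<in>UNIV. outer (w k) (w k))) = (\<Sum>k\<in>UNIV. cinner (w k) (A *v w k))"
  by (simp add: mult_sum_mat trace_sum trace_outer)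

lemma decomp_mv: "(\<Sum>k\<in>UNIV. outer (w k) (w k)) *v v = (\<Sum>k\<in>UNIV. cinner (w k) v *s w k)"
  by (simp add: sum_mult_vec outer_mult)

lemma psd_trace_nonneg:
  fixes A F :: "complex^'d^'d"
  assumes "psd A" "psd F"
  shows "0 \<le> Re (trace (A ** F))"
proof -
  obtain w :: "'d \<Rightarrow> complex^'d" where w: "F = (\<Sum>k\<in>UNIV. outer (w k) (w k))" using psd_decomp[OF assms(2)] by blast
  show ?thesis unfolding w trace_decomp Re_sum
    using assms(1) by (intro sum_nonneg) (simp add: psd_def)
qed

lemma psd_trace_zero:
  fixes D F :: "complex^'d^'d"
  assumes D: "psd D" and F: "psd F" and z: "Re (trace (D ** F)) = 0"
  shows "\<exists>w::'d \<Rightarrow> complex^'d. F = (\<Sum>k\<in>UNIV. outer (w k) (w k)) \<and> (\<forall>k. D *v w k = 0)"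
proof -
  obtain w :: "'d \<Rightarrow> complex^'d" where w: "F = (\<Sum>k\<in>UNIV. outer (w k) (w k))" using psd_decomp[OF F] by blast
  have "(\<Sum>k\<in>UNIV. Re (cinner (w k) (D *v w k))) = 0"
    using z unfolding w trace_decomp Re_sum .
  then have "\<forall>k\<in>UNIV. Re (cinner (w k) (D *v w k)) = 0"
    using D by (subst sum_nonneg_eq_0_iff[symmetric]) (auto simp: psd_def)
  then have "\<forall>k. D *v w k = 0" using psd_form_zero[OF D] by blast
  then show ?thesis using w by blast
qed

lemma is_orth_projI:
  assumes "hermitian P" "P ** P = P" "\<And>v. P *v v \<in> S" "\<And>v. v \<in> S \<Longrightarrow> P *v v = v"
  shows "is_orth_proj P S"
  unfolding is_orth_proj_def using assms by (auto simp: image_iff) (metis)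

lemma is_orth_proj_fix:
  assumes "is_orth_proj P S" "v \<in> S" shows "P *v v = v"
proof -
  obtain y where "v = P *v y" using assms by (auto simp: is_orth_proj_def)
  then show ?thesis using assms by (simp add: is_orth_proj_def matrix_vector_mul_assoc)
qed

lemma is_orth_proj_in:
  assumes "is_orth_proj P S" shows "P *v v \<in> S"
  using assms by (auto simp: is_orth_proj_def)

lemma is_orth_proj_herm: "is_orth_proj P S \<Longrightarrow> hermitian P"
  by (simp add: is_orth_proj_def)

lemma mat_eqI: "(\<And>v. (A::complex^'d^'d) *v v = B *v v) \<Longrightarrow> A = B"
  using matrix_eq by blast

lemma orth_proj_unique:
  assumes P: "is_orth_proj P S" and Q: "is_orth_proj Q S"
  shows "P = Q"
proof (rule mat_eqI, rule cinner_ext)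
  fix u v
  have HP: "hermitian P" and HQ: "hermitian Q" using P Q by (simp_all add: is_orth_proj_def)
  have "cinner u (P *v v) = cinner u (Q *v (P *v v))"
    using is_orth_proj_fix[OF Q is_orth_proj_in[OF P]] by simp
  also have "\<dots> = cinner (Q *v u) (P *v v)" by (rule hermitian_cinner[OF HQ])
  also have "\<dots> = cinner (P *v (Q *v u)) v" by (rule hermitian_cinner[OF HP])
  also have "\<dots> = cinner (Q *v u) v"
    using is_orth_proj_fix[OF P is_orth_proj_in[OF Q]] by simp
  also have "\<dots> = cinner u (Q *v v)" by (rule hermitian_cinner[OF HQ, symmetric])
  finally show "cinner u (P *v v) = cinner u (Q *v v)" .
qed

lemma orth_proj_eq: "is_orth_proj P S \<Longrightarrow> orth_proj S = P"
  unfolding orth_proj_def using orth_proj_unique by blast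

definition perp :: "(complex^'d) set \<Rightarrow> (complex^'d) set" where
  "perp W = {v. \<forall>w\<in>W. cinner w v = 0}"

lemma perp_proj_exists:
  assumes "finite W"
  shows "\<exists>P. is_orth_proj P (perp W)"
  using assms
proof (induction W rule: finite_induct)
  case empty
  have "is_orth_proj (mat 1) (perp {})"
    by (rule is_orth_projI) (simp_all add: hermitian_def adjoint_mat1 perp_def)
  then show ?case by blast
next
  case (insert u W)
  then obtain P where P: "is_orth_proj P (perp W)" by blast
  have HP: "hermitian P" using P by (simp add: is_orth_proj_def)
  have PP: "P *v (P *v v) = P *v v" for v using is_orth_proj_fix[OF P is_orth_proj_in[OF P]] .
  define u' where "u' = P *v u"
  show ?case
  proof (cases "u' = 0")
    case True
    have "perp (insert u W) = perp W"
    proof (auto simp: perp_def)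
      fix v assume v: "\<forall>w\<in>W. cinner w v = 0"
      then have "P *v v = v" using is_orth_proj_fix[OF P] by (simp add: perp_def)
      then have "cinner u v = cinner u (P *v v)" by simp
      also have "\<dots> = cinner u' v" using hermitian_cinner[OF HP] u'_def by simp
      finally show "cinner u v = 0" using True by simp
    qed
    then show ?thesis using P by auto
  next
    case False
    define c where "c = Re (cinner u' u')"
    have cc: "cinner u' u' = of_real c" using cinner_self_real c_def by blast
    have "cinner u' u' \<noteq> 0" using False cinner_self_eq_0[of u'] by blast
    then have "c \<noteq> 0" using cc by auto
    then have cpos: "c > 0" using cinner_self_Re_nonneg[of u'] c_def by simp
    define P' where "P' = P - (1/c) *\<^sub>R outer u' u'"
    have Pu': "P *v u' = u'" using PP u'_def by simp
    have u'P: "cinner u' (P *v v) = cinner u' v" for v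
      using hermitian_cinner[OF HP, of u' v] Pu' by simp
    have P'v: "P' *v v = P *v v - (of_real (1/c) * cinner u' v) *s u'" for v
      by (simp add: P'_def matrix_vector_mult_diff_rdistrib scaleR_mv outer_mult vec_eq_iff
          vector_scalar_mult_def)
    have PP'v: "P *v (P' *v v) = P' *v v" for v
      by (simp add: P'v matrix_vector_mult_diff_distrib mv_scale PP Pu')
    have u'P'v: "cinner u' (P' *v v) = 0" for v
      using cpos by (simp add: P'v cinner_diff_right cinner_scale_right u'P cc)
    have "is_orth_proj P' (perp (insert u W))"
    proof (rule is_orth_projI)
      show "hermitian P'" unfolding P'_def
        by (intro hermitian_diff hermitian_scaleR HP hermitian_outer)
      show "P' ** P' = P'"
      proof (rule mat_eqI)
        fix v
        have "(P' ** P') *v v = P' *v (P' *v v)" by (simp add: matrix_vector_mul_assoc)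
        also have "\<dots> = P' *v v"
          by (subst (1) P'v) (simp add: PP'v u'P'v)
        finally show "(P' ** P') *v v = P' *v v" .
      qed
      fix v
      have inW: "P' *v v \<in> perp W" using PP'v is_orth_proj_in[OF P] by metis
      have "cinner u (P' *v v) = cinner u (P *v (P' *v v))" by (simp add: PP'v)
      also have "\<dots> = cinner u' (P' *v v)" using hermitian_cinner[OF HP] u'_def by simp
      finally have "cinner u (P' *v v) = 0" using u'P'v by simp
      then show "P' *v v \<in> perp (insert u W)" using inW by (simp add: perp_def)
    next
      fix v assume v: "v \<in> perp (insert u W)"
      then have vW: "v \<in> perp W" and uv: "cinner u v = 0" by (auto simp: perp_def)
      have Pv: "P *v v = v" using is_orth_proj_fix[OF P vW] .
      have "cinner u' v = cinner u (P *v v)" using hermitian_cinner[OF HP] u'_def by simp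
      then have "cinner u' v = 0" using Pv uv by simp
      then show "P' *v v = v" by (simp add: P'v Pv)
    qed
    then show ?thesis by blast
  qed
qed


lemma kernel_perp:
  fixes D :: "complex^'d^'d"
  assumes "psd D"
  shows "\<exists>d::'d \<Rightarrow> complex^'d. kernel_op D = perp (range d)"
proof -
  obtain d :: "'d \<Rightarrow> complex^'d" where d: "D = (\<Sum>k\<in>UNIV. outer (d k) (d k))" using psd_decomp[OF assms] by blast
  have "v \<in> kernel_op D \<longleftrightarrow> v \<in> perp (range d)" for v
  proof
    assume "v \<in> kernel_op D"
    then have "D *v v = 0" by (simp add: kernel_op_def)
    then have "cinner v (D *v v) = 0" by simp
    then have "(\<Sum>k\<in>UNIV. cinner (d k) v * cnj (cinner (d k) v)) = 0"
      unfolding d decomp_mv cinner_sum_right cinner_scale_right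
      by (simp add: cinner_commute[of v])
    then have "(\<Sum>k\<in>UNIV. complex_of_real ((cmod (cinner (d k) v))^2)) = 0"
      by (simp only: complex_norm_square)
    then have "(\<Sum>k\<in>UNIV. (cmod (cinner (d k) v))^2) = 0"
      unfolding of_real_sum[symmetric] of_real_eq_0_iff .
    then have "\<forall>k\<in>UNIV. (cmod (cinner (d k) v))^2 = 0"
      by (subst sum_nonneg_eq_0_iff[symmetric]) auto
    then show "v \<in> perp (range d)" by (auto simp: perp_def)
  next
    assume "v \<in> perp (range d)"
    then show "v \<in> kernel_op D"
      by (simp add: perp_def kernel_op_def d decomp_mv)
  qed
  then have "kernel_op D = perp (range d)" by (rule set_eqI)
  then show ?thesis by blast
qed

lemma kernel_proj:
  fixes D :: "complex^'d^'d"
  assumes "psd D" shows "\<exists>P. is_orth_proj P (kernel_op D)"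
proof -
  obtain d :: "'d \<Rightarrow> complex^'d" where d: "kernel_op D = perp (range d)"
    using kernel_perp[OF assms] by blast
  have "finite (range d)" by simp
  then obtain P where "is_orth_proj P (perp (range d))" using perp_proj_exists by blast
  then show ?thesis using d by auto
qed

lemma support_proj:
  assumes P: "is_orth_proj P (kernel_op D)" and HD: "hermitian D"
  shows "is_orth_proj (mat 1 - P) (support_op D)"
proof (rule is_orth_projI)
  have HP: "hermitian P" using P by (simp add: is_orth_proj_def)
  have PP: "P *v (P *v v) = P *v v" for v using is_orth_proj_fix[OF P is_orth_proj_in[OF P]] .
  show "hermitian (mat 1 - P)" by (intro hermitian_diff HP) (simp add: hermitian_def adjoint_mat1)
  show "(mat 1 - P) ** (mat 1 - P) = mat 1 - P"
    by (rule mat_eqI) (simp add: matrix_vector_mul_assoc[symmetric] matrix_vector_mult_diff_rdistrib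
        matrix_vector_mult_diff_distrib PP)
  fix v
  show "(mat 1 - P) *v v \<in> support_op D"
  proof (auto simp: support_op_def matrix_vector_mult_diff_rdistrib cinner_diff_right)
    fix w assume w: "w \<in> kernel_op D"
    have "cinner w (P *v v) = cinner (P *v w) v" by (rule hermitian_cinner[OF HP])
    also have "\<dots> = cinner w v" using is_orth_proj_fix[OF P w] by simp
    finally show "cinner w v = cinner w (P *v v)" by simp
  qed
next
  fix v assume v: "v \<in> support_op D"
  have HP: "hermitian P" using P by (simp add: is_orth_proj_def)
  have PP: "P *v (P *v v) = P *v v" using is_orth_proj_fix[OF P is_orth_proj_in[OF P]] .
  have "cinner (P *v v) v = 0" using v is_orth_proj_in[OF P] by (simp add: support_op_def)
  then have "cinner v (P *v v) = 0" by (metis cinner_commute complex_cnj_zero)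
  then have "cinner (P *v v) (P *v v) = 0" using hermitian_cinner[OF HP, of v "P *v v"] PP by simp
  then have "P *v v = 0" by (simp add: cinner_self_eq_0)
  then show "(mat 1 - P) *v v = v" by (simp add: matrix_vector_mult_diff_rdistrib)
qed




lemma trace_scaleR: "trace ((c::real) *\<^sub>R (A::complex^'d^'d)) = c *\<^sub>R trace A"
  by (simp add: trace_def scaleR_sum_right)

lemma mat_diff_mult: "((A::complex^'d^'d) - B) ** M = A ** M - B ** M"
  by (simp add: matrix_matrix_mult_def vec_eq_iff sum_subtractf left_diff_distrib)

lemma ens_psd: "ensemble n \<eta> \<rho> \<Longrightarrow> i \<in> {1..n} \<Longrightarrow> psd (\<rho> i)"
  by (simp add: ensemble_def density_def)
lemma ens_pos: "ensemble n \<eta> \<rho> \<Longrightarrow> i \<in> {1..n} \<Longrightarrow> \<eta> i > 0"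
  by (simp add: ensemble_def)

lemma rest_psd:
  assumes E: "ensemble n \<eta> \<rho>" and x: "x \<in> {1..n}"
  shows "psd (rho0 n \<eta> \<rho> - \<eta> x *\<^sub>R \<rho> x)"
proof -
  have "rho0 n \<eta> \<rho> - \<eta> x *\<^sub>R \<rho> x = (\<Sum>i\<in>{1..n}-{x}. \<eta> i *\<^sub>R \<rho> i)"
    unfolding rho0_def using x by (simp add: sum.remove)
  also have "psd \<dots>"
    using E by (intro psd_sum psd_scaleR) (auto simp: ens_psd less_imp_le ens_pos)
  finally show ?thesis .
qed

lemma rho0_psd:
  assumes E: "ensemble n \<eta> \<rho>"
  shows "psd (rho0 n \<eta> \<rho>)"
  unfolding rho0_def using E by (intro psd_sum psd_scaleR) (auto simp: ens_psd less_imp_le ens_pos)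

lemma ratio_ineq:
  assumes E: "ensemble n \<eta> \<rho>" and x: "x \<in> {1..n}" and M: "psd M"
  shows "\<eta> x * Re (trace (\<rho> x ** M)) \<le> Re (trace (rho0 n \<eta> \<rho> ** M))"
proof -
  have "0 \<le> Re (trace ((rho0 n \<eta> \<rho> - \<eta> x *\<^sub>R \<rho> x) ** M))"
    by (rule psd_trace_nonneg[OF rest_psd[OF E x] M])
  then show ?thesis
    by (simp add: mat_diff_mult trace_sub scalar_matrix_assoc[symmetric] trace_scaleR)
qed

lemma D_psd:
  fixes \<rho> :: "nat \<Rightarrow> complex^'d^'d"
  assumes E: "ensemble n \<eta> \<rho>" and x: "x \<in> {1..n}"
  shows "psd (Dx n \<eta> \<rho> x)"
proof -
  define R0 where "R0 = rho0 n \<eta> \<rho>"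
  define C where "C = Cx n \<eta> \<rho> x"
  define X where "X = {\<eta> x * Re (trace (\<rho> x ** M x)) / Re (trace (R0 ** M x)) | Mq M.
      measurement n Mq M \<and> Re (trace (R0 ** M x)) > 0}"
  have CX: "C = Sup X" by (simp add: C_def Cx_def X_def R0_def)
  have bdd: "bdd_above X"
  proof (rule bdd_aboveI[of _ 1])
    fix r assume "r \<in> X"
    then obtain Mq M where r: "r = \<eta> x * Re (trace (\<rho> x ** M x)) / Re (trace (R0 ** M x))"
      and m: "measurement n Mq M" and pos: "Re (trace (R0 ** M x)) > 0" by (auto simp: X_def)
    have "psd (M x)" using m x by (simp add: measurement_def)
    then have "\<eta> x * Re (trace (\<rho> x ** M x)) \<le> Re (trace (R0 ** M x))"
      using ratio_ineq[OF E x] R0_def by simp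
    then show "r \<le> 1" using pos r by simp
  qed
  have HR0: "hermitian R0" using rho0_psd[OF E] by (simp add: R0_def psd_def)
  have Hx: "hermitian (\<rho> x)" using ens_psd[OF E x] by (simp add: psd_def)
  have ex: "\<eta> x > 0" using ens_pos[OF E x] .
  have "0 \<le> Re (cinner v (Dx n \<eta> \<rho> x *v v))" for v
  proof -
    define r0 where "r0 = Re (cinner v (R0 *v v))"
    define rx where "rx = Re (cinner v (\<rho> x *v v))"
    have Dv: "Re (cinner v (Dx n \<eta> \<rho> x *v v)) = C * r0 - \<eta> x * rx"
      by (simp add: Dx_def C_def R0_def[symmetric] matrix_vector_mult_diff_rdistrib scaleR_mv
          cinner_diff_right cinner_scale_right r0_def rx_def)
    have ineq: "\<eta> x * rx \<le> r0"
      using ratio_ineq[OF E x psd_outer[of v]] by (simp add: trace_outer r0_def rx_def R0_def)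
    have r0nn: "0 \<le> r0" using rho0_psd[OF E] by (simp add: psd_def r0_def R0_def)
    have rxnn: "0 \<le> rx" using ens_psd[OF E x] by (simp add: psd_def rx_def)
    show ?thesis
    proof (cases "r0 = 0")
      case True
      then have "\<eta> x * rx \<le> 0" using ineq by simp
      then have "rx \<le> 0" using ex by (simp add: mult_le_0_iff)
      then have "rx = 0" using rxnn by simp
      then show ?thesis using Dv True by simp
    next
      case False
      then have r0pos: "r0 > 0" using r0nn by simp
      then have "v \<noteq> 0" by (auto simp: r0_def)
      then have "cinner v v \<noteq> 0" by (simp add: cinner_self_eq_0)
      then have "Re (cinner v v) \<noteq> 0" using cinner_self_real[of v] by force
      then have vv: "Re (cinner v (mat 1 *v v)) > 0"
        using cinner_self_Re_nonneg[of v] by simp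
      define a where "a = Re (cinner v (mat 1 *v v))"
      define T where "T = (1/a) *\<^sub>R outer v v"
      define M where "M = (\<lambda>i. if i = x then T else 0)"
      have psd1: "psd (mat 1 :: complex^'d^'d)"
        by (simp add: psd_def hermitian_def adjoint_mat1 cinner_self_Re_nonneg)
      have psdMq: "psd (mat 1 - T)"
        using schur_step[OF psd1 a_def] vv a_def by (simp add: T_def)
      have psdT: "psd T" unfolding T_def using vv a_def by (intro psd_scaleR psd_outer) auto
      have "(\<Sum>i=1..n. M i) = T" using x by (simp add: M_def sum.delta)
      then have meas: "measurement n (mat 1 - T) M"
        using psdMq psdT by (auto simp: measurement_def M_def psd_zero)
      have trT: "Re (trace (A ** T)) = (1/a) * Re (cinner v (A *v v))" for A
        by (simp add: T_def scalar_matrix_assoc[symmetric] matrix_scalar_ac trace_scaleR trace_outer)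
      have apos: "a > 0" using vv a_def by simp
      have pos: "Re (trace (R0 ** M x)) > 0"
        using apos r0pos by (simp add: M_def trT r0_def)
      have "\<eta> x * Re (trace (\<rho> x ** M x)) / Re (trace (R0 ** M x)) \<in> X"
        unfolding X_def by (intro CollectI exI[of _ "mat 1 - T"] exI[of _ M] conjI refl meas pos)
      then have "\<eta> x * Re (trace (\<rho> x ** M x)) / Re (trace (R0 ** M x)) \<le> C"
        using CX bdd cSup_upper by metis
      then have "\<eta> x * rx / r0 \<le> C"
        using apos by (simp add: M_def trT r0_def rx_def)
      then have "\<eta> x * rx \<le> C * r0" using r0pos by (simp add: divide_le_eq)
      then show ?thesis using Dv by simp
    qed
  qed
  moreover have "hermitian (Dx n \<eta> \<rho> x)"
    unfolding Dx_def R0_def[symmetric] by (intro hermitian_diff hermitian_scaleR HR0 Hx)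
  ultimately show ?thesis by (simp add: psd_def)
qed


theorem lemma2:
  fixes \<eta> :: "nat \<Rightarrow> real" and \<rho> :: "nat \<Rightarrow> complex^'d^'d" and n x :: nat
  assumes "ensemble n \<eta> \<rho>" and "x \<in> {1..n}"
  shows "Mset n \<eta> \<rho> x = {E. psd E \<and> E ** orth_proj (support_op (Dx n \<eta> \<rho> x)) = 0}
     \<and> Mdual n \<eta> \<rho> x = {E. hermitian E \<and>
           psd (orth_proj (kernel_op (Dx n \<eta> \<rho> x)) ** E ** orth_proj (kernel_op (Dx n \<eta> \<rho> x)))}"
proof -
  define D where "D = Dx n \<eta> \<rho> x"
  have psdD: "psd D" unfolding D_def by (rule D_psd[OF assms])
  have HD: "hermitian D" using psdD by (simp add: psd_def)
  obtain P where P: "is_orth_proj P (kernel_op D)" using kernel_proj[OF psdD] by blast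
  have Q: "is_orth_proj (mat 1 - P) (support_op D)" by (rule support_proj[OF P HD])
  have PK: "orth_proj (kernel_op D) = P" by (rule orth_proj_eq[OF P])
  have QS: "orth_proj (support_op D) = mat 1 - P" by (rule orth_proj_eq[OF Q])
  have HP: "hermitian P" using P by (simp add: is_orth_proj_def)
  define Q' where "Q' = mat 1 - P"
  have Q': "is_orth_proj Q' (support_op D)" using Q by (simp add: Q'_def)
  have DvS: "D *v v \<in> support_op D" for v
    by (auto simp: support_op_def kernel_op_def hermitian_cinner[OF HD])
  have part1: "Mset n \<eta> \<rho> x = {E. psd E \<and> E ** Q' = 0}"
  proof (intro set_eqI iffI)
    fix E assume "E \<in> Mset n \<eta> \<rho> x"
    then have E: "psd E" and tr: "trace (D ** E) = 0" by (auto simp: Mset_def D_def)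
    obtain w :: "'d \<Rightarrow> complex^'d" where w: "E = (\<Sum>k\<in>UNIV. outer (w k) (w k))" and Dw: "\<forall>k. D *v w k = 0"
      using psd_trace_zero[OF psdD E] tr by auto
    have "E ** Q' = 0"
    proof (rule mat_eqI)
      fix v
      have "\<forall>k. cinner (w k) (Q' *v v) = 0"
        using Dw is_orth_proj_in[OF Q', of v] by (auto simp: support_op_def kernel_op_def)
      then show "(E ** Q') *v v = 0 *v v"
        by (simp add: matrix_vector_mul_assoc[symmetric] w decomp_mv)
    qed
    then show "E \<in> {E. psd E \<and> E ** Q' = 0}" using E by simp
  next
    fix E assume "E \<in> {E. psd E \<and> E ** Q' = 0}"
    then have E: "psd E" and EQ: "E ** Q' = 0" by auto
    have "E ** D = 0"
    proof (rule mat_eqI)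
      fix v
      have "(E ** D) *v v = E *v (D *v v)" by (rule matrix_vector_mul_assoc[symmetric])
      also have "\<dots> = E *v (Q' *v (D *v v))" using is_orth_proj_fix[OF Q' DvS] by simp
      also have "\<dots> = (E ** Q') *v (D *v v)" by (rule matrix_vector_mul_assoc)
      also have "\<dots> = 0" using EQ by simp
      finally show "(E ** D) *v v = 0 *v v" by simp
    qed
    then have "trace (D ** E) = 0" by (simp add: trace_mul_sym[of D E] trace_0[unfolded mat_0])
    then show "E \<in> Mset n \<eta> \<rho> x" using E by (simp add: Mset_def D_def)
  qed
  have PEP: "cinner v ((P ** E ** P) *v v) = cinner (P *v v) (E *v (P *v v))" for v E
    by (simp add: matrix_vector_mul_assoc[symmetric] hermitian_cinner[OF HP])
  have part2: "Mdual n \<eta> \<rho> x = {E. hermitian E \<and> psd (P ** E ** P)}"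
  proof (intro set_eqI iffI)
    fix E assume "E \<in> Mdual n \<eta> \<rho> x"
    then have HE: "hermitian E" and du: "\<And>F. F \<in> Mset n \<eta> \<rho> x \<Longrightarrow> 0 \<le> Re (trace (E ** F))"
      by (auto simp: Mdual_def)
    have "0 \<le> Re (cinner v ((P ** E ** P) *v v))" for v
    proof -
      define w where "w = P *v v"
      have "D *v w = 0" using is_orth_proj_in[OF P] by (simp add: w_def kernel_op_def)
      then have "outer w w \<in> Mset n \<eta> \<rho> x"
        by (simp add: Mset_def D_def[symmetric] psd_outer trace_outer)
      then have "0 \<le> Re (trace (E ** outer w w))" by (rule du)
      then show ?thesis by (simp add: PEP trace_outer w_def)
    qed
    moreover have "hermitian (P ** E ** P)"
      using HE HP by (simp add: hermitian_def adjoint_mult matrix_mul_assoc)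
    ultimately show "E \<in> {E. hermitian E \<and> psd (P ** E ** P)}" using HE by (simp add: psd_def)
  next
    fix E assume "E \<in> {E. hermitian E \<and> psd (P ** E ** P)}"
    then have HE: "hermitian E" and pE: "psd (P ** E ** P)" by auto
    have "0 \<le> Re (trace (E ** F))" if F: "F \<in> Mset n \<eta> \<rho> x" for F
    proof -
      have psF: "psd F" and tr: "trace (D ** F) = 0" using F by (auto simp: Mset_def D_def)
      obtain w :: "'d \<Rightarrow> complex^'d" where w: "F = (\<Sum>k\<in>UNIV. outer (w k) (w k))" and Dw: "\<forall>k. D *v w k = 0"
        using psd_trace_zero[OF psdD psF] tr by auto
      have Pw: "P *v w k = w k" for k
        using is_orth_proj_fix[OF P] Dw by (simp add: kernel_op_def)
      have "trace (E ** F) = (\<Sum>k\<in>UNIV. cinner (w k) ((P ** E ** P) *v w k))"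
        unfolding w trace_decomp PEP Pw ..
      then show ?thesis using pE by (simp add: Re_sum sum_nonneg psd_def)
    qed
    then show "E \<in> Mdual n \<eta> \<rho> x" using HE by (simp add: Mdual_def)
  qed
  show ?thesis using part1 part2 by (simp add: D_def[symmetric] PK QS Q'_def)
qed

end
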